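(* Let $g_1(s),\dots,g_n(s)$ and $f(s)$ be rational transfer functions such that there is $\gamma>0$ with $\mathrm{Re}(g_i(s))\ge\frac1\gamma|g_i(s)|^2$ for all $\mathrm{Re}(s)>0$ and all $i$, and $f$ is positive real ($\mathrm{Re}(f(s))>0$ for $\mathrm{Re}(s)>0$, $\mathrm{Im}(f(s))=0$ for $\mathrm{Re}(s)=0$). Then for any $V_k\in\mathbb{R}^{n\times k}$ with $V_k^TV_k=I$ and any symmetric $\Lambda_k\succeq0$, the transfer matrix $$T(s)=V_k\big(V_k^T\mathrm{diag}\{g_i^{-1}(s)\}V_k+f(s)\Lambda_k\big)^{-1}V_k^T$$ satisfies $\|T(s)\|_{\mathcal{H}_\infty}\le\gamma$.
   Context: $\|T\|_{\mathcal{H}_\infty}=\sup_{\mathrm{Re}(s)>0}\|T(s)\|$, with $\|\cdot\|$ the spectral norm. *)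

theory Defs
  imports "HOL-Analysis.Analysis" "HOL-Computational_Algebra.Polynomial"
begin

text \<open>A (real-)rational transfer function: a quotient of two polynomials with real
  coefficients, the denominator not identically zero (division by zero gives 0).\<close>
definition rational_tf :: "(complex \<Rightarrow> complex) \<Rightarrow> bool" where
  "rational_tf g \<longleftrightarrow> (\<exists>p q :: complex poly. q \<noteq> 0 \<and>
      (\<forall>j. coeff p j \<in> \<real>) \<and> (\<forall>j. coeff q j \<in> \<real>) \<and>
      (\<forall>s. g s = poly p s / poly q s))"

definition positive_real_tf :: "(complex \<Rightarrow> complex) \<Rightarrow> bool" where
  "positive_real_tf f \<longleftrightarrow> (\<forall>s. Re s > 0 \<longrightarrow> Re (f s) > 0) \<and> (\<forall>s. Re s = 0 \<longrightarrow> Im (f s) = 0)"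

definition spectral_norm :: "complex^'n^'m \<Rightarrow> real" where
  "spectral_norm A = onorm (\<lambda>x. A *v x)"

definition cmat :: "real^'n^'m \<Rightarrow> complex^'n^'m" where
  "cmat A = (\<chi> i j. complex_of_real (A $ i $ j))"

definition transfer_T :: "('n \<Rightarrow> complex \<Rightarrow> complex) \<Rightarrow> (complex \<Rightarrow> complex)
    \<Rightarrow> real^'k^'n \<Rightarrow> real^'k^'k \<Rightarrow> complex \<Rightarrow> complex^'n^'n" where
  "transfer_T g f V L s =
     cmat V ** matrix_inv (cmat (transpose V) ** (\<chi> i j. if i = j then inverse (g i s) else 0) ** cmat V
                           + (\<chi> i j. f s * (cmat L) $ i $ j))
     ** cmat (transpose V)"

text \<open>H-infinity norm: supremum of the spectral norm over the open right half-plane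
  (restricted to points where all g_i(s) are nonzero, i.e. where the formula is defined;
  the rational matrix extends continuously).\<close>

end

theory Submission
  imports Defs
begin


definition herm :: "complex^'a \<Rightarrow> complex^'a \<Rightarrow> complex" where
  "herm x y = (\<Sum>i\<in>UNIV. cnj (x$i) * y$i)"

lemma herm_Re: "Re (herm x y) = x \<bullet> y"
  by (simp add: herm_def inner_vec_def inner_complex_def Re_sum)

lemma herm_add: "herm x (y + w) = herm x y + herm x w"
  by (simp add: herm_def distrib_left sum.distrib)

lemma herm_zero: "herm x 0 = 0"
  by (simp add: herm_def)

lemma herm_transpose:
  fixes V :: "real^'k::finite^'n::finite"
  shows "herm z (cmat (transpose V) *v y) = herm (cmat V *v z) y"
proof -
  have "herm z (cmat (transpose V) *v y) = (\<Sum>j\<in>UNIV. \<Sum>i\<in>UNIV. cnj (z$j) * (of_real (V$i$j) * y$i))"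
    unfolding herm_def cmat_def matrix_vector_mult_def transpose_def
    by (simp add: sum_distrib_left)
  also have "\<dots> = (\<Sum>i\<in>UNIV. \<Sum>j\<in>UNIV. cnj (z$j) * (of_real (V$i$j) * y$i))"
    by (rule sum.swap)
  also have "\<dots> = herm (cmat V *v z) y"
    unfolding herm_def cmat_def matrix_vector_mult_def
    by (simp add: cnj_sum sum_distrib_left sum_distrib_right mult_ac)
  finally show ?thesis .
qed

lemma cmat_mult: "cmat (A ** B) = cmat A ** cmat B"
  unfolding cmat_def matrix_matrix_mult_def by (simp add: vec_eq_iff)

lemma cmat_one: "cmat (mat 1) = mat 1"
  unfolding cmat_def mat_def by (simp add: vec_eq_iff)

lemma norm_cmat_iso:
  fixes V :: "real^'k::finite^'n::finite"
  assumes "transpose V ** V = mat 1"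
  shows "norm (cmat V *v z) = norm z"
proof -
  have "(norm (cmat V *v z))\<^sup>2 = Re (herm (cmat V *v z) (cmat V *v z))"
    by (simp add: herm_Re power2_norm_eq_inner)
  also have "\<dots> = Re (herm z (cmat (transpose V) *v (cmat V *v z)))"
    by (simp add: herm_transpose)
  also have "\<dots> = Re (herm z z)"
    by (simp add: matrix_vector_mul_assoc assms flip: cmat_mult add: cmat_one)
  also have "\<dots> = (norm z)\<^sup>2" by (simp add: herm_Re power2_norm_eq_inner)
  finally show ?thesis by (simp add: power2_eq_iff_nonneg)
qed

lemma herm_diag:
  fixes h :: "'a::finite \<Rightarrow> complex"
  assumes "\<And>i. Re (h i) \<ge> c"
  shows "Re (herm u ((\<chi> i j. if i = j then h i else 0) *v u)) \<ge> c * (norm u)\<^sup>2"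
proof -
  have e: "(\<chi> i j. if i = j then h i else 0) *v u = (\<chi> i. h i * u$i)"
  proof -
    have "\<And>i. (\<Sum>j\<in>UNIV. (if i = j then h i else 0) * u$j) = h i * u$i"
    proof -
      fix i
      have "(\<Sum>j\<in>UNIV. (if i = j then h i else 0) * u$j) = (\<Sum>j\<in>UNIV. if i = j then h i * u$j else 0)"
        by (rule sum.cong) auto
      also have "\<dots> = h i * u$i" by (simp add: sum.delta)
      finally show "(\<Sum>j\<in>UNIV. (if i = j then h i else 0) * u$j) = h i * u$i" .
    qed
    thus ?thesis by (simp add: matrix_vector_mult_def vec_eq_iff)
  qed
  have p: "\<And>a b. Re (cnj a * (b * a)) = Re b * (cmod a)\<^sup>2"
  proof -
    fix a b :: complex
    show "Re (cnj a * (b * a)) = Re b * (cmod a)\<^sup>2" unfolding cmod_power2 by (simp add: algebra_simps power2_eq_square)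
  qed
  have "Re (herm u ((\<chi> i j. if i = j then h i else 0) *v u)) = (\<Sum>i\<in>UNIV. Re (h i) * (cmod (u$i))\<^sup>2)"
    unfolding e herm_def Re_sum vec_lambda_beta p by (rule refl)
  also have "\<dots> \<ge> (\<Sum>i\<in>UNIV. c * (cmod (u$i))\<^sup>2)"
    by (rule sum_mono, rule mult_right_mono, rule assms, simp)
  moreover have "(\<Sum>i\<in>UNIV. c * (cmod (u$i))\<^sup>2) = c * (norm u)\<^sup>2"
  proof -
    have "(norm u)\<^sup>2 = (\<Sum>i\<in>UNIV. (cmod (u$i))\<^sup>2)"
      by (simp add: norm_vec_def L2_set_def sum_nonneg)
    thus ?thesis by (simp add: sum_distrib_left)
  qed
  ultimately show ?thesis by simp
qed

lemma herm_psd: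
  fixes L :: "real^'k::finite^'k" and c :: complex
  assumes sym: "transpose L = L" and psd: "\<And>x. x \<bullet> (L *v x) \<ge> 0" and c: "Re c > 0"
  shows "Re (c * herm z (cmat L *v z)) \<ge> 0"
proof -
  define a where "a = (\<chi> j. Re (z$j))"
  define b where "b = (\<chi> j. Im (z$j))"
  have re: "Re (herm z (cmat L *v z)) = a \<bullet> (L *v a) + b \<bullet> (L *v b)"
    unfolding a_def b_def herm_def cmat_def
    by (simp add: inner_vec_def matrix_vector_mult_def Re_sum Im_sum sum_distrib_left sum.distrib[symmetric] algebra_simps)
  have im: "Im (herm z (cmat L *v z)) = a \<bullet> (L *v b) - b \<bullet> (L *v a)"
    unfolding a_def b_def herm_def cmat_def
    by (simp add: inner_vec_def matrix_vector_mult_def Re_sum Im_sum sum_distrib_left sum_subtractf[symmetric] algebra_simps)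
  have s: "b \<bullet> (L *v a) = a \<bullet> (L *v b)"
  proof -
    have t0: "transpose L *v b = b v* L" by (rule transpose_matrix_vector)
    have t: "b v* L = L *v b" using t0 unfolding sym by (rule HOL.sym)
    have "b \<bullet> (L *v a) = (b v* L) \<bullet> a" by (rule dot_lmul_matrix[symmetric])
    also have "\<dots> = (L *v b) \<bullet> a" by (simp only: t)
    also have "\<dots> = a \<bullet> (L *v b)" by (rule inner_commute)
    finally show ?thesis .
  qed
  have "Im (herm z (cmat L *v z)) = 0" using im s by simp
  moreover have "Re (herm z (cmat L *v z)) \<ge> 0" using re psd by (simp add: add_nonneg_nonneg)
  ultimately show ?thesis using c by simp
qed
theorem lemma5:
  fixes g :: "'n::finite \<Rightarrow> complex \<Rightarrow> complex"
    and f :: "complex \<Rightarrow> complex"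
    and \<gamma> :: real
    and V :: "real^'k::finite^'n"
    and L :: "real^'k^'k"
  assumes "\<gamma> > 0"
    and "\<And>i. rational_tf (g i)"
    and "\<And>i s. Re s > 0 \<Longrightarrow> Re (g i s) \<ge> (1 / \<gamma>) * (cmod (g i s))\<^sup>2"
    and "rational_tf f"
    and "positive_real_tf f"
    and "transpose V ** V = mat 1"
    and "transpose L = L"
    and "\<And>x. x \<bullet> (L *v x) \<ge> 0"
  shows "\<forall>s. Re s > 0 \<and> (\<forall>i. g i s \<noteq> 0) \<longrightarrow> spectral_norm (transfer_T g f V L s) \<le> \<gamma>"
proof (intro allI impI)
  fix s assume hs: "Re s > 0 \<and> (\<forall>i. g i s \<noteq> 0)"
  define D :: "complex^'n^'n" where "D = (\<chi> i j. if i = j then inverse (g i s) else 0)"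
  define Vc where "Vc = cmat V"
  define Vt where "Vt = cmat (transpose V)"
  define Lc :: "complex^'k^'k" where "Lc = (\<chi> i j. f s * (cmat L) $ i $ j)"
  define M where "M = Vt ** D ** Vc + Lc"
  have fpos: "Re (f s) > 0" using assms(5) hs unfolding positive_real_tf_def by blast
  have ginv: "Re (inverse (g i s)) \<ge> 1 / \<gamma>" for i
  proof -
    have gz: "g i s \<noteq> 0" using hs by blast
    hence c0: "(cmod (g i s))\<^sup>2 > 0" by simp
    have eq: "Re (inverse (g i s)) = Re (g i s) / (cmod (g i s))\<^sup>2"
      by (simp add: cmod_power2)
    have ineq: "Re (g i s) \<ge> (1 / \<gamma>) * (cmod (g i s))\<^sup>2" using assms(3) hs by blast
    have "1 / \<gamma> \<le> Re (g i s) / (cmod (g i s))\<^sup>2"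
      by (subst pos_le_divide_eq[OF c0]) (rule ineq)
    thus ?thesis unfolding eq .
  qed
  have LcL: "herm z (Lc *v z) = f s * herm z (cmat L *v z)" for z :: "complex^'k"
    unfolding Lc_def herm_def matrix_vector_mult_def
    by (simp add: sum_distrib_left mult_ac)
  have key: "(1 / \<gamma>) * (norm z)\<^sup>2 \<le> Re (herm z (M *v z))" for z
  proof -
    have "M *v z = Vt *v (D *v (Vc *v z)) + Lc *v z"
      unfolding M_def by (simp add: matrix_vector_mult_add_rdistrib matrix_vector_mul_assoc matrix_mul_assoc)
    hence "Re (herm z (M *v z)) = Re (herm (Vc *v z) (D *v (Vc *v z))) + Re (f s * herm z (cmat L *v z))"
      by (simp add: herm_add LcL Vt_def Vc_def herm_transpose)
    moreover have "Re (herm (Vc *v z) (D *v (Vc *v z))) \<ge> (1 / \<gamma>) * (norm (Vc *v z))\<^sup>2"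
      unfolding D_def by (rule herm_diag, rule ginv)
    moreover have "Re (f s * herm z (cmat L *v z)) \<ge> 0"
      by (rule herm_psd[OF assms(7) assms(8) fpos])
    moreover have "norm (Vc *v z) = norm z" unfolding Vc_def by (rule norm_cmat_iso[OF assms(6)])
    ultimately show ?thesis by simp
  qed
  have inj: "inj ((*v) M)"
  proof (rule injI)
    fix x y assume "M *v x = M *v y"
    hence "M *v (x - y) = 0" by (simp add: matrix_vector_mult_diff_distrib)
    hence "(1 / \<gamma>) * (norm (x - y))\<^sup>2 \<le> 0" using key[of "x - y"] by (simp add: herm_zero)
    thus "x = y" using assms(1) by (auto simp: divide_le_0_iff)
  qed
  have "det M \<noteq> 0"
    using det_nz_iff_inj_gen[OF matrix_vector_mul_linear_gen, of M] inj
    by (simp add: matrix_of_matrix_vector_mul)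
  hence "invertible M" by (simp add: invertible_det_nz)
  hence MI: "M ** matrix_inv M = mat 1"
    unfolding invertible_def matrix_inv_def by (rule someI_ex[THEN conjunct1])
  have T: "transfer_T g f V L s = Vc ** matrix_inv M ** Vt"
    unfolding transfer_T_def M_def Vc_def Vt_def D_def Lc_def by (rule refl)
  show "spectral_norm (transfer_T g f V L s) \<le> \<gamma>"
    unfolding spectral_norm_def T
  proof (rule onorm_le)
    fix y :: "complex^'n"
    define z where "z = matrix_inv M *v (Vt *v y)"
    have Ty: "(Vc ** matrix_inv M ** Vt) *v y = Vc *v z"
      unfolding z_def by (simp add: matrix_vector_mul_assoc matrix_mul_assoc)
    have Mz: "M *v z = Vt *v y"
      unfolding z_def by (simp add: matrix_vector_mul_assoc matrix_mul_assoc MI)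
    have nz: "norm (Vc *v z) = norm z" unfolding Vc_def by (rule norm_cmat_iso[OF assms(6)])
    have "(1 / \<gamma>) * (norm z)\<^sup>2 \<le> Re (herm z (Vt *v y))" using key[of z] Mz by simp
    also have "\<dots> = (Vc *v z) \<bullet> y" by (simp add: Vt_def Vc_def herm_transpose herm_Re)
    also have "\<dots> \<le> norm (Vc *v z) * norm y" by (rule norm_cauchy_schwarz)
    finally have "(1 / \<gamma>) * (norm z)\<^sup>2 \<le> norm z * norm y" using nz by simp
    hence "(norm z)\<^sup>2 \<le> \<gamma> * (norm z * norm y)" using assms(1)
      by (simp add: field_simps)
    hence "norm z * norm z \<le> norm z * (\<gamma> * norm y)" by (simp add: power2_eq_square mult_ac)
    hence "norm z \<le> \<gamma> * norm y"
      by (cases "norm z = 0") (use assms(1) in \<open>auto simp: mult_le_cancel_left\<close>)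
    thus "norm ((Vc ** matrix_inv M ** Vt) *v y) \<le> \<gamma> * norm y" using Ty nz by simp
  qed
qed

end
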